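(* Let $m\equiv1\pmod 8$ be a square-free integer all of whose prime factors are $\equiv\pm1\pmod 8$. Then $m\equiv1\pmod{16}$ if and only if $\left(\frac{2+\sqrt2}{|m|}\right)=1$.
   Context: For each prime $p\equiv\pm1\pmod 8$, $2$ is a square modulo $p$; for $p\mid m$ choose $s_p$ with $s_p^2\equiv2\pmod p$. Then $\left(\frac{2+\sqrt2}{|m|}\right):=\prod_{p\mid m}\left(\frac{2+s_p}{p}\right)$ (product of Legendre symbols), which is independent of the choices of $s_p$ since $(2+s_p)(2-s_p)\equiv 2$ is a nonzero square mod $p$; equivalently it is $\prod_{p\mid m}(2+\sqrt2,|m|)_p$ with $\sqrt2\in\mathbb{Q}_p$ and $(\cdot,\cdot)_p$ the Hilbert symbol. *)

theory Defs
  imports "HOL-Number_Theory.Number_Theory" "HOL-Computational_Algebra.Squarefree"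
begin

text \<open>A chosen square root of 2 modulo p (meaningful when 2 is a square mod p).\<close>
definition sqrt2_mod :: "int \<Rightarrow> int" where
  "sqrt2_mod p = (SOME s. [s^2 = 2] (mod p))"

text \<open>The symbol ((2 + sqrt 2) / |m|) := product over primes p dividing m of
  Legendre (2 + s_p) p, with s_p a square root of 2 mod p.\<close>
definition jacobi_2_plus_sqrt2 :: "int \<Rightarrow> int" where
  "jacobi_2_plus_sqrt2 m = (\<Prod>p\<in>prime_factors \<bar>m\<bar>. Legendre (2 + sqrt2_mod p) p)"

end

theory Submission
  imports Defs Complex_Main
begin


definition GI :: "complex \<Rightarrow> bool" where
  "GI z \<longleftrightarrow> (\<exists>a b::int. z = of_int a + \<i> * of_int b)"

lemma GI_of_int[simp]: "GI (of_int a)" unfolding GI_def by (rule exI[of _ a], rule exI[of _ 0]) simp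
lemma GI_0[simp]: "GI 0" using GI_of_int[of 0] by simp
lemma GI_1[simp]: "GI 1" using GI_of_int[of 1] by simp
lemma GI_i[simp]: "GI \<i>" unfolding GI_def by (rule exI[of _ 0], rule exI[of _ 1]) simp
lemma GI_add[simp]: "GI x \<Longrightarrow> GI y \<Longrightarrow> GI (x + y)"
  unfolding GI_def by (auto, rule_tac x="a+aa" in exI, rule_tac x="b+ba" in exI, simp add: algebra_simps)
lemma GI_uminus[simp]: "GI x \<Longrightarrow> GI (- x)"
  unfolding GI_def by (auto, rule_tac x="-a" in exI, rule_tac x="-b" in exI, simp add: algebra_simps)
lemma GI_diff[simp]: "GI x \<Longrightarrow> GI y \<Longrightarrow> GI (x - y)"
  using GI_add[of x "-y"] by simp
lemma GI_mult[simp]: "GI x \<Longrightarrow> GI y \<Longrightarrow> GI (x * y)"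
  unfolding GI_def by (auto, rule_tac x="a*aa - b*ba" in exI, rule_tac x="a*ba+b*aa" in exI, simp add: algebra_simps)
lemma GI_power[simp]: "GI x \<Longrightarrow> GI (x ^ n)"
  by (induction n) auto
lemma GI_of_nat[simp]: "GI (of_nat n)" using GI_of_int[of "int n"] by simp
lemma GI_numeral[simp]: "GI (numeral n)" using GI_of_int[of "numeral n"] by simp
lemma GI_sum: "(\<And>k. k \<in> A \<Longrightarrow> GI (f k)) \<Longrightarrow> GI (sum f A)"
  by (induction A rule: infinite_finite_induct) auto

definition gc :: "int \<Rightarrow> complex \<Rightarrow> complex \<Rightarrow> bool" where
  "gc p z w \<longleftrightarrow> (\<exists>g. GI g \<and> z - w = of_int p * g)"

lemma gc_refl[simp]: "gc p z z" unfolding gc_def by (rule exI[of _ 0]) simp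
lemma gc_sym: "gc p z w \<Longrightarrow> gc p w z" unfolding gc_def
  by (auto, rule_tac x="-g" in exI, simp add: algebra_simps)
lemma gc_trans: "gc p x y \<Longrightarrow> gc p y z \<Longrightarrow> gc p x z" unfolding gc_def
  by (auto, rule_tac x="g+ga" in exI, simp add: algebra_simps)
lemma gc_add: "gc p x y \<Longrightarrow> gc p x' y' \<Longrightarrow> gc p (x + x') (y + y')" unfolding gc_def
  by (auto, rule_tac x="g+ga" in exI, simp add: algebra_simps)
lemma gc_mult: "gc p x y \<Longrightarrow> gc p x' y' \<Longrightarrow> GI x \<Longrightarrow> GI y' \<Longrightarrow> gc p (x * x') (y * y')"
  unfolding gc_def
proof (elim exE conjE)
  fix g h assume "GI g" "x - y = of_int p * g" "GI h" "x' - y' = of_int p * h" "GI x" "GI y'"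
  then have "x * x' - y * y' = of_int p * (x * h + g * y')"
    by (simp add: algebra_simps)
  moreover have "GI (x * h + g * y')" using \<open>GI g\<close> \<open>GI h\<close> \<open>GI x\<close> \<open>GI y'\<close> by simp
  ultimately show "\<exists>g. GI g \<and> x * x' - y * y' = of_int p * g" by blast
qed
lemma gc_cmult: "gc p x y \<Longrightarrow> GI c \<Longrightarrow> gc p (c * x) (c * y)"
  unfolding gc_def
proof (elim exE conjE)
  fix g assume "GI g" "x - y = of_int p * g" "GI c"
  then have "c * x - c * y = of_int p * (c * g)"
    by (metis mult.left_commute right_diff_distrib)
  then show "\<exists>g. GI g \<and> c * x - c * y = of_int p * g" using \<open>GI g\<close> \<open>GI c\<close> GI_mult by blast
qed
lemma gc_pow: "gc p x y \<Longrightarrow> GI x \<Longrightarrow> GI y \<Longrightarrow> gc p (x ^ n) (y ^ n)"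
  by (induction n) (auto intro: gc_mult)
lemma gc_of_int: "[a = b] (mod p) \<Longrightarrow> gc p (of_int a) (of_int b)"
  unfolding gc_def cong_iff_dvd_diff dvd_def
  by (auto, rule_tac x="of_int k" in exI, metis of_int_diff of_int_mult GI_of_int)
lemma gc_cong: "gc p (of_int a + \<i> * of_int b) (of_int c + \<i> * of_int d) \<Longrightarrow>
   [a = c] (mod p) \<and> [b = d] (mod p)"
  unfolding gc_def GI_def cong_iff_dvd_diff
proof (elim exE conjE)
  fix g x y assume "g = of_int x + \<i> * of_int y"
    "of_int a + \<i> * of_int b - (of_int c + \<i> * of_int d) = of_int p * g"
  then have "of_int a + \<i> * of_int b - (of_int c + \<i> * of_int d) = of_int (p*x) + \<i> * of_int (p*y)"
    by (simp add: algebra_simps)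
  then have "Re (of_int a + \<i> * of_int b - (of_int c + \<i> * of_int d)) = Re (of_int (p*x) + \<i> * of_int (p*y) :: complex)"
    "Im (of_int a + \<i> * of_int b - (of_int c + \<i> * of_int d)) = Im (of_int (p*x) + \<i> * of_int (p*y) :: complex)"
    by simp_all
  then have "real_of_int a - real_of_int c = real_of_int (p*x)" "real_of_int b - real_of_int d = real_of_int (p*y)"
    by simp_all
  then have "a - c = p * x" "b - d = p * y" by (simp_all only: of_int_diff[symmetric] of_int_eq_iff)
  then show "p dvd a - c \<and> p dvd b - d" by auto
qed
lemma gc_cong_int: "gc p (of_int a) (of_int c) \<Longrightarrow> [a = c] (mod p)"
  using gc_cong[of p a 0 c 0] by simp

lemma freshman:
  fixes p :: int
  assumes "prime p" "GI x" "GI y"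
  shows "gc p ((x + y) ^ nat p) (x ^ nat p + y ^ nat p)"
proof -
  define n where "n = nat p"
  have pn2: "p = int n" using assms(1) n_def prime_ge_0_int by simp
  have "prime (int n)" using assms(1) pn2 by simp
  then have pn1: "prime n" by simp
  note pn = pn1 pn2
  have n1: "n > 1" using pn prime_gt_1_nat by blast
  have "(x + y) ^ n = (\<Sum>k\<le>n. of_nat (n choose k) * x ^ k * y ^ (n - k))"
    by (rule binomial_ring)
  also have "{..n} = insert 0 (insert n {1..<n})" using n1 by auto
  also have "(\<Sum>k\<in>insert 0 (insert n {1..<n}). of_nat (n choose k) * x ^ k * y ^ (n - k))
     = y ^ n + x ^ n + (\<Sum>k\<in>{1..<n}. of_nat (n choose k) * x ^ k * y ^ (n - k))"
  proof -
    have h: "0 \<notin> insert n {1..<n}" "n \<notin> {1..<n}" using n1 by auto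
    define f where "f = (\<lambda>k. of_nat (n choose k) * x ^ k * y ^ (n - k))"
    have "sum f (insert 0 (insert n {1..<n})) = f 0 + sum f (insert n {1..<n})"
      by (rule sum.insert) (use h in auto)
    also have "sum f (insert n {1..<n}) = f n + sum f {1..<n}"
      by (rule sum.insert) (use h in auto)
    also have "f 0 = y ^ n" unfolding f_def by simp
    also have "f n = x ^ n" unfolding f_def by simp
    finally have "sum f (insert 0 (insert n {1..<n})) = y ^ n + (x ^ n + sum f {1..<n})" .
    then show ?thesis unfolding f_def by (simp only: add.assoc)
  qed
  also have "(\<Sum>k\<in>{1..<n}. of_nat (n choose k) * x ^ k * y ^ (n - k)) =
     of_int p * (\<Sum>k\<in>{1..<n}. of_nat ((n choose k) div n) * x ^ k * y ^ (n - k))"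
    unfolding sum_distrib_left
  proof (rule sum.cong)
    fix k assume "k \<in> {1..<n}"
    then have "n dvd (n choose k)" using dvd_choose_prime[of k n] pn n1 by auto
    then have eqc: "(n choose k) = n * ((n choose k) div n)" by simp
    have "(of_nat (n choose k) :: complex) = of_nat (n * ((n choose k) div n))"
      by (rule arg_cong[OF eqc])
    also have "\<dots> = of_nat n * of_nat ((n choose k) div n)" by (rule of_nat_mult)
    also have "(of_nat n :: complex) = of_int p" using pn(2) by simp
    finally have "(of_nat (n choose k) :: complex) = of_int p * of_nat ((n choose k) div n)" .
    then show "of_nat (n choose k) * x ^ k * y ^ (n - k) = of_int p * (of_nat ((n choose k) div n) * x ^ k * y ^ (n - k))"
      by (simp only: mult.assoc)
  qed simp
  finally have eq: "(x + y) ^ n = y ^ n + x ^ n +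
     of_int p * (\<Sum>k\<in>{1..<n}. of_nat ((n choose k) div n) * x ^ k * y ^ (n - k))" .
  have gi: "GI (\<Sum>k\<in>{1..<n}. of_nat ((n choose k) div n) * x ^ k * y ^ (n - k))"
    by (rule GI_sum) (simp add: assms)
  have "(x + y) ^ n - (x ^ n + y ^ n) =
     of_int p * (\<Sum>k\<in>{1..<n}. of_nat ((n choose k) div n) * x ^ k * y ^ (n - k))"
    by (subst eq) (simp only: add_diff_cancel_left' add.commute)
  then show ?thesis unfolding gc_def n_def[symmetric] using gi by blast
qed

lemma gc_eqI: "z - w = a - b \<Longrightarrow> gc p a b \<Longrightarrow> gc p z w"
  unfolding gc_def by auto

lemma fermat_int:
  fixes n :: nat
  assumes "prime n" "n > 2"
  shows "[a ^ n = a] (mod int n)"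
proof (cases "[a = 0] (mod int n)")
  case True
  then have "[a ^ n = 0 ^ n] (mod int n)" by (rule cong_pow)
  moreover have "(0::int) ^ n = 0" using assms by simp
  ultimately have "[a ^ n = 0] (mod int n)" by simp
  then show ?thesis using True by (meson cong_sym cong_trans)
next
  case False
  have e: "[Legendre a (int n) = a ^ ((n - 1) div 2)] (mod int n)"
    using euler_criterion assms by blast
  have L: "Legendre a (int n) ^ 2 = 1" using False unfolding Legendre_def by auto
  have "odd n" using assms prime_odd_nat by blast
  then have nn: "n = Suc ((n - 1) div 2 * 2)"
    by (auto elim!: oddE)
  have "[Legendre a (int n) ^ 2 = (a ^ ((n - 1) div 2)) ^ 2] (mod int n)" using e by (rule cong_pow)
  then have "[1 = a ^ ((n - 1) div 2 * 2)] (mod int n)" using L by (simp add: power_mult)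
  then have "[a * 1 = a * a ^ ((n - 1) div 2 * 2)] (mod int n)" by (rule cong_scalar_left)
  then have "[a = a ^ n] (mod int n)" by (subst nn) simp
  then show ?thesis by (rule cong_sym)
qed

lemma i_pow_8: "\<i> ^ (8 * k) = 1"
  by (simp add: power_mult)

lemma gc_int_mult_cancel:
  assumes "[x * c = y * c] (mod int n)" "prime n" "\<not> int n dvd c"
  shows "[x = y] (mod int n)"
proof -
  have "prime (int n)" using assms(2) by simp
  then have "coprime (int n) c" using assms(3) by (rule prime_imp_coprime)
  then have "coprime c (int n)" by (simp add: coprime_commute)
  then show ?thesis using assms(1) cong_mult_rcancel by blast
qed

lemma u_part:
  fixes n :: nat
  assumes "prime n" "n > 2"
  shows "n mod 8 = 1 \<Longrightarrow> [16 ^ (n div 8) = 1] (mod int n)"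
    and "n mod 8 = 7 \<Longrightarrow> [16 ^ ((n + 1) div 8) = 2] (mod int n)"
proof -
  let ?p = "int n"
  have fr: "gc ?p ((1 + \<i>) ^ n) (1 + \<i> ^ n)"
    using freshman[of ?p 1 \<i>] assms by simp
  have not2: "\<not> int n dvd 2" using assms
    by (metis dvd_imp_le int_dvd_int_iff not_less of_nat_numeral zero_less_numeral)
  have u8: "(1 + \<i>) ^ (8 * k) = 16 ^ k" for k
  proof -
    have "(1 + \<i>) ^ 8 = 16" by (simp add: power_mult_distrib power2_eq_square eval_nat_numeral algebra_simps)
    then show ?thesis by (simp add: power_mult)
  qed
  {
    assume h: "n mod 8 = 1"
    define k where "k = n div 8"
    have nk: "n = 8 * k + 1" using h unfolding k_def by presburger
    have "\<i> ^ n = \<i>" using nk i_pow_8[of k] by (simp add: power_add)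
    then have "gc ?p (16 ^ k * (1 + \<i>)) (1 + \<i>)" using fr u8[of k] nk by (simp add: power_add ac_simps)
    then have "gc ?p ((1 - \<i>) * (16 ^ k * (1 + \<i>))) ((1 - \<i>) * (1 + \<i>))"
      by (rule gc_cmult) simp
    then have "gc ?p (of_int (16 ^ k * 2)) (of_int (1 * 2))"
      by (simp add: algebra_simps)
    then have "[16 ^ k * 2 = 1 * 2] (mod ?p)" by (rule gc_cong_int)
    then show "[16 ^ (n div 8) = 1] (mod int n)" using gc_int_mult_cancel assms not2 k_def by blast
  }
  {
    assume h: "n mod 8 = 7"
    define k where "k = (n + 1) div 8"
    have nk: "n + 1 = 8 * k" using h unfolding k_def by presburger
    have "\<i> ^ n * \<i> = 1" using nk i_pow_8[of k] by (metis power_Suc2 Suc_eq_plus1)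
    then have "\<i> ^ n = - \<i>" by (metis i_squared mult_minus_right power2_eq_square minus_equation_iff mult.commute mult_cancel_left complex_i_not_zero)
    then have "gc ?p ((1 + \<i>) * (1 + \<i>) ^ n) ((1 + \<i>) * (1 - \<i>))" using fr
      by (intro gc_cmult) auto
    moreover have "(1 + \<i>) * (1 + \<i>) ^ n = of_int (16 ^ k)" using u8[of k] nk
      by (metis power_Suc Suc_eq_plus1 of_int_numeral of_int_power)
    moreover have "(1 + \<i>) * (1 - \<i>) = of_int 2" by (simp add: algebra_simps)
    ultimately have "gc ?p (of_int (16 ^ k)) (of_int 2)" by simp
    then show "[16 ^ ((n + 1) div 8) = 2] (mod int n)" using gc_cong_int k_def by blast
  }
qed


lemma not_dvd_2s:
  fixes n :: nat
  assumes "prime n" "n > 2" "[s^2 = 2] (mod int n)"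
  shows "\<not> int n dvd (2 + s)" "\<not> int n dvd ((s + 1)^2 + 1)"
proof -
  have not2: "\<not> int n dvd 2" using assms
    by (metis dvd_imp_le int_dvd_int_iff not_less of_nat_numeral zero_less_numeral)
  have d: "int n dvd s^2 - 2" using assms(3) by (simp add: cong_iff_dvd_diff)
  show a: "\<not> int n dvd (2 + s)"
  proof
    assume "int n dvd (2 + s)"
    then have "int n dvd (2 + s) * (2 - s)" by simp
    then have "int n dvd (2 + s) * (2 - s) + (s^2 - 2)" using d by simp
    moreover have "(2 + s) * (2 - s) + (s^2 - 2) = 2" by (simp add: algebra_simps power2_eq_square)
    ultimately show False using not2 by simp
  qed
  show "\<not> int n dvd ((s + 1)^2 + 1)"
  proof
    assume "int n dvd ((s + 1)^2 + 1)"
    then have "int n dvd ((s + 1)^2 + 1) - (s^2 - 2)" using d by (rule dvd_diff)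
    moreover have "((s + 1)^2 + 1) - (s^2 - 2) = 2 * (2 + s)" by (simp add: algebra_simps power2_eq_square)
    ultimately have "int n dvd 2 * (2 + s)" by simp
    moreover have "prime (int n)" using assms(1) by simp
    ultimately show False using a not2
      by (metis prime_dvd_mult_iff)
  qed
qed

lemma v_part:
  fixes n :: nat
  assumes "prime n" "n > 2" "[s^2 = 2] (mod int n)"
  shows "n mod 8 = 1 \<Longrightarrow> [(-64) ^ (n div 8) * (s + 1) ^ (4 * (n div 8)) = 1] (mod int n)"
    and "n mod 8 = 7 \<Longrightarrow> [(-64) ^ ((n + 1) div 8) * (s + 1) ^ (4 * ((n + 1) div 8)) = (s + 1)^2 + 1] (mod int n)"
proof -
  let ?p = "int n"
  define S1 where "S1 = (of_int (s + 1) :: complex)"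
  define v where "v = S1 + \<i>"
  define w where "w = S1 - \<i>"
  have GS[simp]: "GI S1" "GI v" "GI w" unfolding S1_def v_def w_def by simp_all
  have fr0: "gc ?p (v ^ n) (S1 ^ n + \<i> ^ n)"
    using freshman[of ?p S1 \<i>] assms unfolding v_def by simp
  have "gc ?p (of_int ((s+1) ^ n)) (of_int (s + 1))"
    by (rule gc_of_int) (rule fermat_int[OF assms(1,2)])
  then have "gc ?p (S1 ^ n) S1" unfolding S1_def by simp
  then have "gc ?p (S1 ^ n + \<i> ^ n) (S1 + \<i> ^ n)" by (rule gc_add) simp
  with fr0 have fr: "gc ?p (v ^ n) (S1 + \<i> ^ n)" by (rule gc_trans)
  have v2: "gc ?p (v ^ 2) (2 * (1 + \<i>) * S1)"
  proof (rule gc_eqI)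
    show "v ^ 2 - 2 * (1 + \<i>) * S1 = of_int (s^2) - of_int 2"
      unfolding v_def S1_def by (simp add: power2_eq_square algebra_simps)
    show "gc ?p (of_int (s^2)) (of_int 2)" by (rule gc_of_int) (rule assms(3))
  qed
  have X: "(2 * (1 + \<i>) * S1) ^ (4 * k) = of_int ((-64) ^ k * (s + 1) ^ (4 * k))" for k
  proof -
    have h4: "(2 * (1 + \<i>) * S1) ^ 4 = (-64) * S1 ^ 4"
      by (simp add: power_mult_distrib eval_nat_numeral algebra_simps)
    have "(2 * (1 + \<i>) * S1) ^ (4 * k) = ((2 * (1 + \<i>) * S1) ^ 4) ^ k" by (simp add: power_mult)
    also have "\<dots> = ((-64) * S1 ^ 4) ^ k" using h4 by simp
    also have "\<dots> = (-64) ^ k * S1 ^ (4 * k)" by (simp only: power_mult_distrib power_mult)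
    also have "\<dots> = of_int ((-64) ^ k * (s + 1) ^ (4 * k))" unfolding S1_def by simp
    finally show ?thesis .
  qed
  have v8: "gc ?p (v ^ (8 * k)) (of_int ((-64) ^ k * (s + 1) ^ (4 * k)))" for k
  proof -
    have "gc ?p ((v ^ 2) ^ (4 * k)) ((2 * (1 + \<i>) * S1) ^ (4 * k))"
      using v2 by (rule gc_pow) simp_all
    moreover have "v ^ (8 * k) = (v ^ 2) ^ (4 * k)" by (simp flip: power_mult)
    ultimately show ?thesis using X by simp
  qed
  have wv: "w * v = of_int ((s + 1)^2 + 1)"
    unfolding v_def w_def S1_def by (simp add: power2_eq_square algebra_simps)
  {
    assume h: "n mod 8 = 1"
    define k where "k = n div 8"
    have nk: "n = 8 * k + 1" using h unfolding k_def by presburger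
    have "\<i> ^ n = \<i>" using nk i_pow_8[of k] by (simp add: power_add)
    then have "gc ?p (v ^ n) v" using fr unfolding v_def by simp
    then have "gc ?p (w * v ^ n) (w * v)" by (rule gc_cmult) simp
    moreover have "w * v ^ n = v ^ (8 * k) * (w * v)" using nk by (simp add: power_add ac_simps)
    moreover have "gc ?p (v ^ (8 * k) * (w * v)) (of_int ((-64) ^ k * (s + 1) ^ (4 * k)) * (w * v))"
      by (rule gc_mult[OF v8]) simp_all
    ultimately have "gc ?p (of_int ((-64) ^ k * (s + 1) ^ (4 * k)) * (w * v)) (w * v)"
      by (metis gc_sym gc_trans)
    then have "gc ?p (of_int ((-64) ^ k * (s + 1) ^ (4 * k) * ((s + 1)^2 + 1))) (of_int (1 * ((s + 1)^2 + 1)))"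
      unfolding wv by simp
    then have "[(-64) ^ k * (s + 1) ^ (4 * k) * ((s + 1)^2 + 1) = 1 * ((s + 1)^2 + 1)] (mod ?p)"
      by (rule gc_cong_int)
    then show "[(-64) ^ (n div 8) * (s + 1) ^ (4 * (n div 8)) = 1] (mod int n)"
      using gc_int_mult_cancel assms(1) not_dvd_2s[OF assms] k_def by blast
  }
  {
    assume h: "n mod 8 = 7"
    define k where "k = (n + 1) div 8"
    have nk: "n + 1 = 8 * k" using h unfolding k_def by presburger
    have "\<i> ^ n * \<i> = 1" using nk i_pow_8[of k] by (metis power_Suc2 Suc_eq_plus1)
    then have "\<i> ^ n = - \<i>" by (metis i_squared mult_minus_right power2_eq_square minus_equation_iff mult.commute mult_cancel_left complex_i_not_zero)
    then have "gc ?p (v ^ n) w" using fr unfolding w_def by simp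
    then have "gc ?p (v * v ^ n) (v * w)" by (rule gc_cmult) simp
    moreover have "v * v ^ n = v ^ (8 * k)" using nk by (metis power_Suc Suc_eq_plus1)
    moreover have "v * w = of_int ((s + 1)^2 + 1)" using wv by (simp add: ac_simps)
    ultimately have "gc ?p (of_int ((-64) ^ k * (s + 1) ^ (4 * k))) (of_int ((s + 1)^2 + 1))"
      using v8[of k] by (metis gc_sym gc_trans)
    then show "[(-64) ^ ((n + 1) div 8) * (s + 1) ^ (4 * ((n + 1) div 8)) = (s + 1)^2 + 1] (mod int n)"
      using gc_cong_int k_def by blast
  }
qed



lemma key:
  fixes n :: nat
  assumes "prime n" "n > 2" "[s^2 = 2] (mod int n)" "n mod 8 = 1 \<or> n mod 8 = 7"
  shows "[(2 + s) ^ ((n - 1) div 2) = (if n mod 16 = 1 \<or> n mod 16 = 15 then 1 else -1)] (mod int n)"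
proof -
  let ?p = "int n"
  have not2: "\<not> int n dvd 2" using assms
    by (metis dvd_imp_le int_dvd_int_iff not_less of_nat_numeral zero_less_numeral)
  have pp: "prime (int n)" using assms(1) by simp
  have nd: "\<not> int n dvd 2 * (2 + s)" using not_dvd_2s(1)[OF assms(1-3)] not2 pp
    by (metis prime_dvd_mult_iff)
  have c1: "[(2 + s) ^ (4 * k) = 4 ^ k * (s + 1) ^ (4 * k)] (mod ?p)" for k
  proof -
    have "[s ^ 2 + s = 2 + s] (mod ?p)" using assms(3) by (rule cong_add) simp
    then have "[s * (s + 1) = 2 + s] (mod ?p)" by (simp add: power2_eq_square algebra_simps)
    then have a: "[(s * (s + 1)) ^ (4 * k) = (2 + s) ^ (4 * k)] (mod ?p)" by (rule cong_pow)
    have e: "(s * (s + 1)) ^ (4 * k) = (s ^ 2) ^ (2 * k) * (s + 1) ^ (4 * k)"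
      by (simp add: power_mult_distrib flip: power_mult)
    have "[(s ^ 2) ^ (2 * k) = 2 ^ (2 * k)] (mod ?p)" using assms(3) by (rule cong_pow)
    moreover have "(2::int) ^ (2 * k) = 4 ^ k" by (simp add: power_mult)
    ultimately have "[(s ^ 2) ^ (2 * k) * (s + 1) ^ (4 * k) = 4 ^ k * (s + 1) ^ (4 * k)] (mod ?p)"
      by (simp add: cong_mult)
    then show ?thesis using a e by (metis cong_sym cong_trans)
  qed
  have c2: "[(-64) ^ k * (s + 1) ^ (4 * k) = (-1) ^ k * 16 ^ k * (2 + s) ^ (4 * k)] (mod ?p)" for k
  proof -
    have "(-64::int) ^ k = ((-1) * 16 * 4) ^ k" by simp
    also have "\<dots> = (-1) ^ k * 16 ^ k * 4 ^ k" by (simp only: power_mult_distrib)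
    finally have "(-64::int) ^ k * (s + 1) ^ (4 * k) = (-1) ^ k * 16 ^ k * 4 ^ k * (s + 1) ^ (4 * k)" by simp
    then have e: "(-64::int) ^ k * (s + 1) ^ (4 * k) = (-1) ^ k * 16 ^ k * (4 ^ k * (s + 1) ^ (4 * k))"
      by (simp only: mult.assoc)
    have cg: "[(-1) ^ k * 16 ^ k * (4 ^ k * (s + 1) ^ (4 * k)) = (-1) ^ k * 16 ^ k * (2 + s) ^ (4 * k)] (mod ?p)"
      using c1[of k] by (intro cong_scalar_left) (rule cong_sym)
    show ?thesis unfolding e by (rule cg)
  qed
  have m1: "(-1::int) ^ k * (-1) ^ k = 1" for k by (simp flip: power_add)
  from assms(4) show ?thesis
  proof
    assume h: "n mod 8 = 1"
    define k where "k = n div 8"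
    have nk: "n = 8 * k + 1" using h div_mult_mod_eq[of n 8] unfolding k_def by linarith
    have e1: "(n - 1) div 2 = 4 * k" using nk by simp
    have par: "(n mod 16 = 1 \<or> n mod 16 = 15) \<longleftrightarrow> even k"
    proof (cases "even k")
      case True
      then obtain t where "k = 2 * t" by (auto elim!: evenE)
      then have "n = 16 * t + 1" using nk by simp
      then show ?thesis using True by simp
    next
      case False
      then obtain t where "k = 2 * t + 1" by (auto elim!: oddE)
      then have "n = 16 * t + 9" using nk by simp
      then show ?thesis using False by simp
    qed
    have u: "[16 ^ k = 1] (mod ?p)" using u_part(1)[OF assms(1,2) h] k_def by simp
    have v: "[(-64) ^ k * (s + 1) ^ (4 * k) = 1] (mod ?p)" using v_part(1)[OF assms(1-3) h] k_def by simp
    have cc: "[(-1) ^ k * 16 ^ k * (2 + s) ^ (4 * k) = (-1) ^ k * 1 * (2 + s) ^ (4 * k)] (mod ?p)"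
      using u by (intro cong_mult cong_refl) auto
    have "[(-1) ^ k * 1 * (2 + s) ^ (4 * k) = 1] (mod ?p)"
      using cong_trans[OF cong_sym[OF cc] cong_trans[OF cong_sym[OF c2[of k]] v]] .
    then have "[(-1) ^ k * (2 + s) ^ (4 * k) = 1] (mod ?p)" by simp
    then have "[(-1) ^ k * ((-1) ^ k * (2 + s) ^ (4 * k)) = (-1) ^ k * 1] (mod ?p)"
      by (rule cong_scalar_left)
    then have "[(2 + s) ^ (4 * k) = (-1) ^ k] (mod ?p)" using m1[of k]
      by (simp add: mult.assoc[symmetric])
    then show ?thesis using e1 par by (cases "even k") simp_all
  next
    assume h: "n mod 8 = 7"
    define k where "k = (n + 1) div 8"
    define j where "j = n div 8"
    have nj: "n = 8 * j + 7" using h div_mult_mod_eq[of n 8] unfolding j_def by linarith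
    have kj: "k = j + 1" unfolding k_def using nj by simp
    have nk: "n + 1 = 8 * k" "k = j + 1" "n = 8 * j + 7" using nj kj by simp_all
    have e1: "(n - 1) div 2 = 4 * j + 3" using nk by simp
    have par: "(n mod 16 = 1 \<or> n mod 16 = 15) \<longleftrightarrow> even k"
    proof (cases "even k")
      case True
      then obtain t where "k = 2 * t" by (auto elim!: evenE)
      then have "n = 16 * t - 1" "t > 0" using nk by simp_all
      then have "n mod 16 = 15" by (cases t) simp_all
      then show ?thesis using True by simp
    next
      case False
      then obtain t where "k = 2 * t + 1" by (auto elim!: oddE)
      then have "n = 16 * t + 7" using nk by simp
      then show ?thesis using False by simp
    qed
    have u: "[16 ^ k = 2] (mod ?p)" using u_part(2)[OF assms(1,2) h] k_def by simp
    have v: "[(-64) ^ k * (s + 1) ^ (4 * k) = (s + 1)^2 + 1] (mod ?p)"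
      using v_part(2)[OF assms(1-3) h] k_def by simp
    have N: "[(s + 1)^2 + 1 = 2 * (2 + s)] (mod ?p)"
    proof -
      have "[s^2 + (2 * s + 2) = 2 + (2 * s + 2)] (mod ?p)" using assms(3) by (rule cong_add) simp
      then show ?thesis by (simp add: power2_eq_square algebra_simps)
    qed
    have cc: "[(-1) ^ k * 16 ^ k * (2 + s) ^ (4 * k) = (-1) ^ k * 2 * (2 + s) ^ (4 * k)] (mod ?p)"
      using u by (intro cong_mult cong_refl) auto
    have "[(-1) ^ k * 2 * (2 + s) ^ (4 * k) = 2 * (2 + s)] (mod ?p)"
      using cong_trans[OF cong_sym[OF cc] cong_trans[OF cong_sym[OF c2[of k]] cong_trans[OF v N]]] .
    moreover have "(-1) ^ k * 2 * (2 + s) ^ (4 * k) = ((-1) ^ k * (2 + s) ^ (4 * j + 3)) * (2 * (2 + s))"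
    proof -
      have "4 * k = Suc (4 * j + 3)" using nk by simp
      then have "(2 + s) ^ (4 * k) = (2 + s) * (2 + s) ^ (4 * j + 3)" by (simp only: power_Suc)
      then show ?thesis by (simp only: ac_simps)
    qed
    ultimately have "[((-1) ^ k * (2 + s) ^ (4 * j + 3)) * (2 * (2 + s)) = 1 * (2 * (2 + s))] (mod ?p)"
      by simp
    then have "[(-1) ^ k * (2 + s) ^ (4 * j + 3) = 1] (mod ?p)"
      using gc_int_mult_cancel assms(1) nd by blast
    then have "[(-1) ^ k * ((-1) ^ k * (2 + s) ^ (4 * j + 3)) = (-1) ^ k * 1] (mod ?p)"
      by (rule cong_scalar_left)
    then have "[(2 + s) ^ (4 * j + 3) = (-1) ^ k] (mod ?p)" using m1[of k]
      by (simp add: mult.assoc[symmetric])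
    then show ?thesis using e1 par by (cases "even k") simp_all
  qed
qed

lemma two_qr:
  fixes n :: nat
  assumes "prime n" "n > 2" "n mod 8 = 1 \<or> n mod 8 = 7"
  shows "[2 ^ ((n - 1) div 2) = 1] (mod int n)"
proof -
  have not2: "\<not> int n dvd 2" using assms
    by (metis dvd_imp_le int_dvd_int_iff not_less of_nat_numeral zero_less_numeral)
  from assms(3) show ?thesis
  proof
    assume h: "n mod 8 = 1"
    define m where "m = n div 8"
    have "n = 8 * m + 1" using h div_mult_mod_eq[of n 8] unfolding m_def by linarith
    then have "(n - 1) div 2 = 4 * (n div 8)" unfolding m_def[symmetric] by simp
    then show ?thesis using u_part(1)[OF assms(1,2) h] by (simp add: power_mult)
  next
    assume h: "n mod 8 = 7"
    have nj: "n = 8 * (n div 8) + 7" using h div_mult_mod_eq[of n 8] by linarith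
    then have "(n + 1) div 8 = n div 8 + 1" by simp
    moreover have "(n - 1) div 2 = 4 * (n div 8) + 3" using nj by simp
    ultimately have "(n - 1) div 2 + 1 = 4 * ((n + 1) div 8)" by simp
    then have "(2::int) ^ ((n - 1) div 2) * 2 = 2 ^ (4 * ((n + 1) div 8))"
      by (metis power_Suc2 Suc_eq_plus1)
    also have "\<dots> = 16 ^ ((n + 1) div 8)" by (simp add: power_mult)
    finally have "(2::int) ^ ((n - 1) div 2) * 2 = 16 ^ ((n + 1) div 8)" .
    then have "[2 ^ ((n - 1) div 2) * 2 = 1 * 2] (mod int n)" using u_part(2)[OF assms(1,2) h] by simp
    then show ?thesis using gc_int_mult_cancel assms(1) not2 by blast
  qed
qed



definition chi :: "int \<Rightarrow> int" where
  "chi x = (if x mod 16 = 1 \<or> x mod 16 = 15 then 1 else -1)"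

lemma chi_mult:
  assumes "x mod 16 \<in> {1,7,9,15}" "y mod 16 \<in> {1,7,9,15}"
  shows "(x * y) mod 16 \<in> {1,7,9,15} \<and> chi (x * y) = chi x * chi y"
proof -
  have e: "(x * y) mod 16 = ((x mod 16) * (y mod 16)) mod 16" by (simp add: mod_mult_eq)
  show ?thesis using assms unfolding chi_def e by auto
qed

lemma chi_prod:
  assumes "finite A" "\<forall>x\<in>A. x mod 16 \<in> {1,7,9,15}"
  shows "(\<Prod>A) mod 16 \<in> {1,7,9,15} \<and> chi (\<Prod>A) = (\<Prod>x\<in>A. chi x)"
  using assms
proof (induction A rule: finite_induct)
  case empty
  then show ?case by (simp add: chi_def)
next
  case (insert x F)
  then have "(\<Prod>F) mod 16 \<in> {1,7,9,15}" "chi (\<Prod>F) = (\<Prod>x\<in>F. chi x)" "x mod 16 \<in> {1,7,9,15}" by auto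
  then show ?case using insert(1,2) chi_mult[of x "\<Prod>F"] by simp
qed

lemma small_cong:
  fixes x c :: int
  assumes "[x = c] (mod int n)" "n > 2" "x \<in> {-1,0,1}" "c \<in> {-1,1}"
  shows "x = c"
proof (rule ccontr)
  assume ne: "x \<noteq> c"
  have "int n dvd x - c" using assms(1) by (simp add: cong_iff_dvd_diff)
  then have "\<bar>int n\<bar> \<le> \<bar>x - c\<bar>" using ne by (intro dvd_imp_le_int) auto
  moreover have "\<bar>x - c\<bar> \<le> 2" using assms(3,4) by auto
  ultimately show False using assms(2) by simp
qed

lemma legendre_range: "Legendre a p \<in> {-1,0,1}"
  unfolding Legendre_def by auto

lemma small16:
  fixes r :: int
  assumes "0 \<le> r" "r < 16" "r mod 8 = 1 \<or> r mod 8 = 7"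
  shows "r \<in> {1,7,9,15}"
proof (cases "r < 8")
  case True
  then have "r mod 8 = r" using assms(1) by simp
  then show ?thesis using assms(3) by auto
next
  case False
  have "r mod 8 = (r - 8) mod 8" by (metis mod_add_self2 diff_add_cancel)
  also have "\<dots> = r - 8" by (rule mod_pos_pos_trivial) (use False assms(2) in auto)
  finally show ?thesis using assms(3) by auto
qed

lemma per_prime:
  fixes p :: int
  assumes "prime p" "[p = 1] (mod 8) \<or> [p = -1] (mod 8)"
  shows "Legendre (2 + sqrt2_mod p) p = chi p"
proof -
  define n where "n = nat p"
  have p0: "p > 0" using assms(1) prime_gt_0_int by blast
  have pn: "p = int n" using p0 n_def by simp
  have pr: "prime n" using assms(1) pn by simp
  have pm: "p mod 8 = 1 \<or> p mod 8 = 7" using assms(2) unfolding cong_def by auto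
  have "int (n mod 8) = int n mod 8" by (metis of_nat_mod of_nat_numeral)
  then have nm: "n mod 8 = 1 \<or> n mod 8 = 7" using pm pn by auto
  have n2: "n > 2"
  proof -
    have "n \<ge> 2" using pr prime_ge_2_nat by blast
    moreover have "n \<noteq> 2" using nm by auto
    ultimately show ?thesis by simp
  qed
  have e2: "[Legendre 2 (int n) = 2 ^ ((n - 1) div 2)] (mod int n)" using euler_criterion pr n2 by blast
  have "[Legendre 2 (int n) = 1] (mod int n)" using cong_trans[OF e2 two_qr[OF pr n2 nm]] .
  then have "Legendre 2 (int n) = 1" using small_cong n2 legendre_range by blast
  then have "QuadRes (int n) 2" unfolding Legendre_def by (auto split: if_splits)
  then have "\<exists>s. [s^2 = 2] (mod p)" unfolding QuadRes_def pn .
  then have s: "[sqrt2_mod p ^ 2 = 2] (mod int n)" unfolding sqrt2_mod_def pn by (rule someI_ex)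
  have k: "[(2 + sqrt2_mod p) ^ ((n - 1) div 2) = (if n mod 16 = 1 \<or> n mod 16 = 15 then 1 else -1)] (mod int n)"
    by (rule key[OF pr n2 s nm])
  have e: "[Legendre (2 + sqrt2_mod p) (int n) = (2 + sqrt2_mod p) ^ ((n - 1) div 2)] (mod int n)"
    using euler_criterion pr n2 by blast
  have c: "chi p = (if n mod 16 = 1 \<or> n mod 16 = 15 then 1 else -1)"
  proof -
    have "int (n mod 16) = int n mod 16" by (metis of_nat_mod of_nat_numeral)
    then show ?thesis unfolding chi_def pn by auto
  qed
  have "Legendre (2 + sqrt2_mod p) (int n) = chi p"
    using small_cong[OF cong_trans[OF e k] n2 legendre_range] c by simp
  then show ?thesis using pn by simp
qed

theorem lemma5p4:
  fixes m :: int
  assumes "[m = 1] (mod 8)"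
    and "squarefree m"
    and "\<forall>p\<in>prime_factors m. [p = 1] (mod 8) \<or> [p = -1] (mod 8)"
  shows "[m = 1] (mod 16) \<longleftrightarrow> jacobi_2_plus_sqrt2 m = 1"
proof -
  have m8: "m mod 8 = 1" using assms(1) unfolding cong_def by simp
  then have m0: "m \<noteq> 0" by auto
  have pf: "prime_factors \<bar>m\<bar> = prime_factors m"
    by (metis normalize_int_def prime_factorization_normalize abs_sgn)
  have J: "jacobi_2_plus_sqrt2 m = (\<Prod>p\<in>prime_factors m. chi p)"
    unfolding jacobi_2_plus_sqrt2_def pf
  proof (rule prod.cong[OF refl])
    fix p assume "p \<in> prime_factors m"
    then show "Legendre (2 + sqrt2_mod p) p = chi p"
      using assms(3) in_prime_factors_imp_prime per_prime by blast
  qed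
  have mult1: "\<forall>p\<in>prime_factors m. multiplicity p m = 1"
    using assms(2) squarefree_factorial_semiring'[OF m0] by blast
  have "\<bar>m\<bar> = (\<Prod>p\<in>prime_factors m. p ^ multiplicity p m)"
    using prod_prime_factors[OF m0] by simp
  also have "\<dots> = \<Prod>(prime_factors m)" using mult1 by (intro prod.cong) auto
  finally have am: "\<bar>m\<bar> = \<Prod>(prime_factors m)" .
  have each: "\<forall>x\<in>prime_factors m. x mod 16 \<in> {1,7,9,15}"
  proof
    fix x assume "x \<in> prime_factors m"
    then have "x mod 8 = 1 \<or> x mod 8 = 7" using assms(3) unfolding cong_def by auto
    moreover have "x mod 8 = x mod 16 mod 8" by (simp add: mod_mod_cancel)
    ultimately show "x mod 16 \<in> {1,7,9,15}" using small16[of "x mod 16"] by auto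
  qed
  have CP: "\<bar>m\<bar> mod 16 \<in> {1,7,9,15} \<and> chi \<bar>m\<bar> = jacobi_2_plus_sqrt2 m"
    using chi_prod[OF _ each] am J by simp
  have m16: "m mod 16 = 1 \<or> m mod 16 = 9"
  proof -
    have "m mod 8 = m mod 16 mod 8" by (simp add: mod_mod_cancel)
    then have "m mod 16 \<in> {1,7,9,15}" "m mod 16 mod 8 = 1" using small16[of "m mod 16"] m8 by auto
    then show ?thesis by auto
  qed
  show ?thesis
  proof (cases "m > 0")
    case True
    then have "\<bar>m\<bar> = m" by simp
    then show ?thesis using CP m16 unfolding cong_def chi_def by auto
  next
    case False
    then have "\<bar>m\<bar> = - m" by simp
    moreover have "(- m) mod 16 = (if m mod 16 = 0 then 0 else 16 - m mod 16)"
      by (rule zmod_zminus1_eq_if)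
    ultimately show ?thesis using CP m16 unfolding cong_def chi_def by auto
  qed
qed

end
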